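(* Let $R$ be a commutative ring, $M$ an $R$-module having at least one prime submodule, $X=\mathrm{Spec}(M)$, and $N$ an $R$-module. For each $P\in X$, the stalk $\mathcal{A}(N,M)_P=\varinjlim_{P\in U}\mathcal{A}(N,M)(U)$ is isomorphic to $N_{\mathfrak p}$, where $\mathfrak p=(P:M)$.
   Context: For a submodule $L$ of an $R$-module $M$, $(L:M)=\{r\in R\mid rM\subseteq L\}$. A submodule $P$ of $M$ is prime if $P\neq M$ and whenever $rm\in P$ ($r\in R$, $m\in M$) then $r\in (P:M)$ or $m\in P$; then $(P:M)$ is a prime ideal. $\mathrm{Spec}(M)$ is the set of prime submodules. For $L\le M$, $V(L)=\{P\in X\mid (P:M)\supseteq (L:M)\}$; these are the closed sets of the Zariski topology on $X$. For open $U\subseteq X$, $\mathrm{Supp}(U)=\{(P:M)\mid P\in U\}$. The sheaf $\mathcal{A}(N,M)$ on $X$: $\mathcal{A}(N,M)(U)$ is the set of families $(\gamma_{\mathfrak p})_{\mathfrak p\in\mathrm{Supp}(U)}\in\prod_{\mathfrak p\in\mathrm{Supp}(U)}N_{\mathfrak p}$ such that for each $Q\in U$ there exist an open neighbourhood $W\subseteq U$ of $Q$ and $s\in R$, $m\in N$ with $s\notin (P:M)$ and $\gamma_{(P:M)}=m/s\in N_{(P:M)}$ for every $P\in W$; restriction maps restrict families, and $\mathcal{A}(N,M)(\emptyset)=0$. *)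

theory Defs
  imports Main "HOL.Modules"
begin

text \<open>R is the type 'r (a commutative ring with 1); an R-module is an abelian group type
  with a scalar multiplication sc satisfying the locale module sc (HOL.Modules).\<close>

definition colon :: "('r::comm_ring_1 \<Rightarrow> 'm::ab_group_add \<Rightarrow> 'm) \<Rightarrow> 'm set \<Rightarrow> 'r set" where
  "colon sc L = {r. \<forall>m. sc r m \<in> L}"

definition prime_submodule :: "('r::comm_ring_1 \<Rightarrow> 'm::ab_group_add \<Rightarrow> 'm) \<Rightarrow> 'm set \<Rightarrow> bool" where
  "prime_submodule sc P \<longleftrightarrow> module.subspace sc P \<and> P \<noteq> UNIV \<and>
     (\<forall>r m. sc r m \<in> P \<longrightarrow> r \<in> colon sc P \<or> m \<in> P)"

definition Spec :: "('r::comm_ring_1 \<Rightarrow> 'm::ab_group_add \<Rightarrow> 'm) \<Rightarrow> 'm set set" where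
  "Spec sc = {P. prime_submodule sc P}"

definition zV :: "('r::comm_ring_1 \<Rightarrow> 'm::ab_group_add \<Rightarrow> 'm) \<Rightarrow> 'm set \<Rightarrow> 'm set set" where
  "zV sc L = {P \<in> Spec sc. colon sc L \<subseteq> colon sc P}"

definition zopen :: "('r::comm_ring_1 \<Rightarrow> 'm::ab_group_add \<Rightarrow> 'm) \<Rightarrow> 'm set set \<Rightarrow> bool" where
  "zopen sc U \<longleftrightarrow> (\<exists>L. module.subspace sc L \<and> U = Spec sc - zV sc L)"

definition Supp :: "('r::comm_ring_1 \<Rightarrow> 'm::ab_group_add \<Rightarrow> 'm) \<Rightarrow> 'm set set \<Rightarrow> 'r set set" where
  "Supp sc U = (\<lambda>P. colon sc P) ` U"

definition loc_rel :: "('r::comm_ring_1 \<Rightarrow> 'n::ab_group_add \<Rightarrow> 'n) \<Rightarrow> 'r set \<Rightarrow> (('n \<times> 'r) \<times> ('n \<times> 'r)) set" where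
  "loc_rel scN p = {((n, s), (n', s')). s \<notin> p \<and> s' \<notin> p \<and>
      (\<exists>t. t \<notin> p \<and> scN t (scN s' n - scN s n') = 0)}"

definition Loc :: "('r::comm_ring_1 \<Rightarrow> 'n::ab_group_add \<Rightarrow> 'n) \<Rightarrow> 'r set \<Rightarrow> ('n \<times> 'r) set set" where
  "Loc scN p = {(n, s). s \<notin> p} // loc_rel scN p"

definition frac :: "('r::comm_ring_1 \<Rightarrow> 'n::ab_group_add \<Rightarrow> 'n) \<Rightarrow> 'r set \<Rightarrow> 'n \<Rightarrow> 'r \<Rightarrow> ('n \<times> 'r) set" where
  "frac scN p n s = loc_rel scN p `` {(n, s)}"

definition loc_add :: "('r::comm_ring_1 \<Rightarrow> 'n::ab_group_add \<Rightarrow> 'n) \<Rightarrow> 'r set \<Rightarrow>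
    ('n \<times> 'r) set \<Rightarrow> ('n \<times> 'r) set \<Rightarrow> ('n \<times> 'r) set" where
  "loc_add scN p a b = (let x = (SOME x. x \<in> a); y = (SOME y. y \<in> b) in
     frac scN p (scN (snd y) (fst x) + scN (snd x) (fst y)) (snd x * snd y))"

definition loc_smul :: "('r::comm_ring_1 \<Rightarrow> 'n::ab_group_add \<Rightarrow> 'n) \<Rightarrow> 'r set \<Rightarrow>
    'r \<Rightarrow> ('n \<times> 'r) set \<Rightarrow> ('n \<times> 'r) set" where
  "loc_smul scN p r a = (let x = (SOME x. x \<in> a) in frac scN p (scN r (fst x)) (snd x))"

text \<open>A section over U is a family indexed by Supp(U); outside Supp(U) it is set to the empty set
  (which is never an element of N_p), so families correspond to functions on Supp(U).\<close>
definition sections :: "('r::comm_ring_1 \<Rightarrow> 'm::ab_group_add \<Rightarrow> 'm) \<Rightarrow>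
    ('r \<Rightarrow> 'n::ab_group_add \<Rightarrow> 'n) \<Rightarrow> 'm set set \<Rightarrow> ('r set \<Rightarrow> ('n \<times> 'r) set) set" where
  "sections scM scN U = {\<gamma>.
     (\<forall>p. p \<notin> Supp scM U \<longrightarrow> \<gamma> p = {}) \<and>
     (\<forall>p \<in> Supp scM U. \<gamma> p \<in> Loc scN p) \<and>
     (\<forall>Q \<in> U. \<exists>W s m. zopen scM W \<and> W \<subseteq> U \<and> Q \<in> W \<and>
        (\<forall>P \<in> W. s \<notin> colon scM P \<and> \<gamma> (colon scM P) = frac scN (colon scM P) m s))}"

definition restr :: "('r::comm_ring_1 \<Rightarrow> 'm::ab_group_add \<Rightarrow> 'm) \<Rightarrow> 'm set set \<Rightarrow>
    ('r set \<Rightarrow> ('n \<times> 'r) set) \<Rightarrow> ('r set \<Rightarrow> ('n \<times> 'r) set)" where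
  "restr scM W \<gamma> = (\<lambda>p. if p \<in> Supp scM W then \<gamma> p else {})"

definition sec_add :: "('r::comm_ring_1 \<Rightarrow> 'm::ab_group_add \<Rightarrow> 'm) \<Rightarrow> ('r \<Rightarrow> 'n::ab_group_add \<Rightarrow> 'n) \<Rightarrow>
    'm set set \<Rightarrow> ('r set \<Rightarrow> ('n \<times> 'r) set) \<Rightarrow> ('r set \<Rightarrow> ('n \<times> 'r) set) \<Rightarrow> ('r set \<Rightarrow> ('n \<times> 'r) set)" where
  "sec_add scM scN U \<gamma> \<delta> = (\<lambda>p. if p \<in> Supp scM U then loc_add scN p (\<gamma> p) (\<delta> p) else {})"

definition sec_smul :: "('r::comm_ring_1 \<Rightarrow> 'm::ab_group_add \<Rightarrow> 'm) \<Rightarrow> ('r \<Rightarrow> 'n::ab_group_add \<Rightarrow> 'n) \<Rightarrow>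
    'm set set \<Rightarrow> 'r \<Rightarrow> ('r set \<Rightarrow> ('n \<times> 'r) set) \<Rightarrow> ('r set \<Rightarrow> ('n \<times> 'r) set)" where
  "sec_smul scM scN U r \<gamma> = (\<lambda>p. if p \<in> Supp scM U then loc_smul scN p r (\<gamma> p) else {})"

definition germ_reps :: "('r::comm_ring_1 \<Rightarrow> 'm::ab_group_add \<Rightarrow> 'm) \<Rightarrow> ('r \<Rightarrow> 'n::ab_group_add \<Rightarrow> 'n) \<Rightarrow>
    'm set \<Rightarrow> ('m set set \<times> ('r set \<Rightarrow> ('n \<times> 'r) set)) set" where
  "germ_reps scM scN P = {(U, \<gamma>). zopen scM U \<and> P \<in> U \<and> \<gamma> \<in> sections scM scN U}"

definition germ_rel :: "('r::comm_ring_1 \<Rightarrow> 'm::ab_group_add \<Rightarrow> 'm) \<Rightarrow> ('r \<Rightarrow> 'n::ab_group_add \<Rightarrow> 'n) \<Rightarrow>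
    'm set \<Rightarrow> (('m set set \<times> ('r set \<Rightarrow> ('n \<times> 'r) set)) \<times> ('m set set \<times> ('r set \<Rightarrow> ('n \<times> 'r) set))) set" where
  "germ_rel scM scN P = {((U, \<gamma>), (V, \<delta>)). (U, \<gamma>) \<in> germ_reps scM scN P \<and> (V, \<delta>) \<in> germ_reps scM scN P \<and>
      (\<exists>W. zopen scM W \<and> P \<in> W \<and> W \<subseteq> U \<inter> V \<and> restr scM W \<gamma> = restr scM W \<delta>)}"

definition stalk :: "('r::comm_ring_1 \<Rightarrow> 'm::ab_group_add \<Rightarrow> 'm) \<Rightarrow> ('r \<Rightarrow> 'n::ab_group_add \<Rightarrow> 'n) \<Rightarrow>
    'm set \<Rightarrow> ('m set set \<times> ('r set \<Rightarrow> ('n \<times> 'r) set)) set set" where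
  "stalk scM scN P = germ_reps scM scN P // germ_rel scM scN P"

definition stalk_add :: "('r::comm_ring_1 \<Rightarrow> 'm::ab_group_add \<Rightarrow> 'm) \<Rightarrow> ('r \<Rightarrow> 'n::ab_group_add \<Rightarrow> 'n) \<Rightarrow>
    'm set \<Rightarrow> ('m set set \<times> ('r set \<Rightarrow> ('n \<times> 'r) set)) set \<Rightarrow> ('m set set \<times> ('r set \<Rightarrow> ('n \<times> 'r) set)) set
    \<Rightarrow> ('m set set \<times> ('r set \<Rightarrow> ('n \<times> 'r) set)) set" where
  "stalk_add scM scN P a b = (let (U, \<gamma>) = (SOME x. x \<in> a); (V, \<delta>) = (SOME y. y \<in> b) in
     germ_rel scM scN P `` {(U \<inter> V, sec_add scM scN (U \<inter> V) (restr scM (U \<inter> V) \<gamma>) (restr scM (U \<inter> V) \<delta>))})"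

definition stalk_smul :: "('r::comm_ring_1 \<Rightarrow> 'm::ab_group_add \<Rightarrow> 'm) \<Rightarrow> ('r \<Rightarrow> 'n::ab_group_add \<Rightarrow> 'n) \<Rightarrow>
    'm set \<Rightarrow> 'r \<Rightarrow> ('m set set \<times> ('r set \<Rightarrow> ('n \<times> 'r) set)) set
    \<Rightarrow> ('m set set \<times> ('r set \<Rightarrow> ('n \<times> 'r) set)) set" where
  "stalk_smul scM scN P r a = (let (U, \<gamma>) = (SOME x. x \<in> a) in
     germ_rel scM scN P `` {(U, sec_smul scM scN U r \<gamma>)})"

end

theory Submission
  imports Defs
begin



definition "mprime p \<longleftrightarrow> (1::'a::comm_ring_1) \<notin> p \<and> (\<forall>a b. a \<notin> p \<longrightarrow> b \<notin> p \<longrightarrow> a * b \<notin> p)"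

context module begin

lemma loc_rel_iff: "((m, s), (m', s')) \<in> loc_rel scale p \<longleftrightarrow>
   s \<notin> p \<and> s' \<notin> p \<and> (\<exists>t. t \<notin> p \<and> t *s (s' *s m - s *s m') = 0)"
  by (simp add: loc_rel_def)

lemma trans_ident: "(t * t' * s') *s (s'' *s m - s *s m'') =
        (t' * s'') *s (t *s (s' *s m - s *s m')) + (t * s) *s (t' *s (s'' *s m' - s' *s m''))"
  apply (simp only: scale_right_diff_distrib scale_scale)
  apply (simp add: mult_ac)
  done


lemma loc_equiv:
  assumes "mprime p"
  shows "equiv {(n, s). s \<notin> p} (loc_rel scale p)"
proof (rule equivI)
  have p1: "1 \<notin> p" and pm: "\<And>a b. a \<notin> p \<Longrightarrow> b \<notin> p \<Longrightarrow> a * b \<notin> p"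
    using assms by (auto simp: mprime_def)
  show "loc_rel scale p \<subseteq> {(n, s). s \<notin> p} \<times> {(n, s). s \<notin> p}"
    by (auto simp: loc_rel_def)
  show "refl_on {(n, s). s \<notin> p} (loc_rel scale p)"
  proof (rule refl_onI)
    fix x :: "'b \<times> 'a" assume "x \<in> {(n, s). s \<notin> p}"
    then obtain m s where "x = (m, s)" "s \<notin> p" by auto
    then show "(x, x) \<in> loc_rel scale p" using p1 by (auto simp: loc_rel_iff intro!: exI[of _ 1])
  qed
  show "sym (loc_rel scale p)"
  proof (rule symI)
    fix x y assume "(x, y) \<in> loc_rel scale p"
    moreover obtain m s m' s' where "x = (m, s)" "y = (m', s')" by (cases x, cases y) auto
    ultimately obtain t where "s \<notin> p" "s' \<notin> p" "t \<notin> p" "t *s (s' *s m - s *s m') = 0"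
      by (auto simp: loc_rel_iff)
    moreover have "t *s (s *s m' - s' *s m) = - (t *s (s' *s m - s *s m'))"
      by (metis minus_diff_eq scale_minus_right)
    ultimately show "(y, x) \<in> loc_rel scale p" using \<open>x = _\<close> \<open>y = _\<close>
      by (auto simp: loc_rel_iff)
  qed
  show "trans (loc_rel scale p)"
  proof (rule transI)
    fix x y z assume xy: "(x, y) \<in> loc_rel scale p" and yz: "(y, z) \<in> loc_rel scale p"
    obtain m s m' s' m'' s'' where e: "x = (m, s)" "y = (m', s')" "z = (m'', s'')"
      by (cases x, cases y, cases z) auto
    obtain t where h1: "s \<notin> p" "s' \<notin> p" "t \<notin> p" "t *s (s' *s m - s *s m') = 0"
      using xy e by (auto simp: loc_rel_iff)
    obtain t' where h2: "s'' \<notin> p" "t' \<notin> p" "t' *s (s'' *s m' - s' *s m'') = 0"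
      using yz e by (auto simp: loc_rel_iff)
    have "(t * t' * s') *s (s'' *s m - s *s m'') =
        (t' * s'') *s (t *s (s' *s m - s *s m')) + (t * s) *s (t' *s (s'' *s m' - s' *s m''))"
      by (rule trans_ident)
    also have "\<dots> = 0" using h1 h2 by simp
    finally have "(t * t' * s') *s (s'' *s m - s *s m'') = 0" .
    moreover have "t * t' * s' \<notin> p" using pm h1 h2 by blast
    ultimately show "(x, z) \<in> loc_rel scale p" using e h1 h2 by (auto simp: loc_rel_iff)
  qed
qed

lemma frac_in_Loc: "s \<notin> p \<Longrightarrow> frac scale p m s \<in> Loc scale p"
  unfolding frac_def Loc_def by (rule quotientI) simp

lemma Loc_frac: "A \<in> Loc scale p \<Longrightarrow> \<exists>m s. s \<notin> p \<and> A = frac scale p m s"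
  unfolding frac_def Loc_def by (auto elim!: quotientE)

lemma frac_eq_iff:
  assumes "mprime p" "s \<notin> p" "s' \<notin> p"
  shows "frac scale p m s = frac scale p m' s' \<longleftrightarrow> (\<exists>t. t \<notin> p \<and> t *s (s' *s m - s *s m') = 0)"
proof -
  have "frac scale p m s = frac scale p m' s' \<longleftrightarrow> ((m, s), (m', s')) \<in> loc_rel scale p"
    unfolding frac_def by (rule eq_equiv_class_iff[OF loc_equiv[OF assms(1)]]) (use assms in auto)
  then show ?thesis using assms by (simp add: loc_rel_iff)
qed

lemma in_frac: "x \<in> frac scale p m s \<longleftrightarrow> ((m, s), x) \<in> loc_rel scale p"
  by (simp add: frac_def)

lemma frac_some:
  assumes "mprime p" "s \<notin> p"
  obtains x where "(SOME x. x \<in> frac scale p m s) = x" "frac scale p (fst x) (snd x) = frac scale p m s"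
    "snd x \<notin> p"
proof -
  have "(m, s) \<in> frac scale p m s"
    unfolding frac_def by (rule equiv_class_self[OF loc_equiv[OF assms(1)]]) (use assms in auto)
  then have "(SOME x. x \<in> frac scale p m s) \<in> frac scale p m s" by (rule someI)
  then obtain a b where ab: "(SOME x. x \<in> frac scale p m s) = (a, b)" "((m, s), (a, b)) \<in> loc_rel scale p"
    by (metis in_frac prod.exhaust)
  have "frac scale p m s = frac scale p a b"
    unfolding frac_def by (rule equiv_class_eq[OF loc_equiv[OF assms(1)] ab(2)])
  moreover have "b \<notin> p" using ab(2) by (simp add: loc_rel_iff)
  ultimately have "frac scale p a b = frac scale p m s" "b \<notin> p" by auto
  then show ?thesis using that ab by simp
qed

lemma loc_smul_frac:
  assumes "mprime p" "s \<notin> p"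
  shows "loc_smul scale p r (frac scale p m s) = frac scale p (r *s m) s"
proof -
  obtain x where x: "(SOME x. x \<in> frac scale p m s) = x" "frac scale p (fst x) (snd x) = frac scale p m s"
    "snd x \<notin> p" using frac_some[OF assms] .
  obtain t where t: "t \<notin> p" "t *s (s *s fst x - snd x *s m) = 0"
    using x(2,3) frac_eq_iff[OF assms(1) x(3) assms(2)] by auto
  have "t *s (s *s (r *s fst x) - snd x *s (r *s m)) = r *s (t *s (s *s fst x - snd x *s m))"
    by (simp add: scale_right_diff_distrib mult_ac)
  also have "\<dots> = 0" using t by simp
  finally show ?thesis
    unfolding loc_smul_def Let_def x(1)
    using frac_eq_iff[OF assms(1) x(3) assms(2)] t by auto
qed

lemma add_ident: "(t * t') *s ((s * s') *s (y2 *s x1 + x2 *s y1) - (x2 * y2) *s (s' *s m + s *s m'))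
   = (t' * s' * y2) *s (t *s (s *s x1 - x2 *s m)) + (t * s * x2) *s (t' *s (s' *s y1 - y2 *s m'))"
  apply (simp only: scale_right_diff_distrib scale_right_distrib scale_scale)
  apply (simp add: mult_ac)
  done

lemma loc_add_frac:
  assumes "mprime p" "s \<notin> p" "s' \<notin> p"
  shows "loc_add scale p (frac scale p m s) (frac scale p m' s') = frac scale p (s' *s m + s *s m') (s * s')"
proof -
  have pm: "\<And>a b. a \<notin> p \<Longrightarrow> b \<notin> p \<Longrightarrow> a * b \<notin> p"
    using assms by (auto simp: mprime_def)
  obtain x where x: "(SOME x. x \<in> frac scale p m s) = x" "frac scale p (fst x) (snd x) = frac scale p m s"
    "snd x \<notin> p" using frac_some[OF assms(1,2)] .
  obtain y where y: "(SOME x. x \<in> frac scale p m' s') = y" "frac scale p (fst y) (snd y) = frac scale p m' s'"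
    "snd y \<notin> p" using frac_some[OF assms(1,3)] .
  obtain t where t: "t \<notin> p" "t *s (s *s fst x - snd x *s m) = 0"
    using x(2,3) frac_eq_iff[OF assms(1) x(3) assms(2)] by auto
  obtain t' where t': "t' \<notin> p" "t' *s (s' *s fst y - snd y *s m') = 0"
    using y(2,3) frac_eq_iff[OF assms(1) y(3) assms(3)] by auto
  have "(t * t') *s ((s * s') *s (snd y *s fst x + snd x *s fst y) - (snd x * snd y) *s (s' *s m + s *s m')) = 0"
    unfolding add_ident using t t' by simp
  moreover have "t * t' \<notin> p" "snd x * snd y \<notin> p" "s * s' \<notin> p" using pm t t' x y assms by auto
  ultimately show ?thesis
    unfolding loc_add_def Let_def x(1) y(1)
    using frac_eq_iff[OF assms(1)] by blast
qed

end


locale setting = M: module scM + N: module scN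
  for scM :: "'r::comm_ring_1 \<Rightarrow> 'm::ab_group_add \<Rightarrow> 'm"
  and scN :: "'r \<Rightarrow> 'n::ab_group_add \<Rightarrow> 'n" +
  fixes P :: "'m set"
  assumes PS: "P \<in> Spec scM"
begin

lemma colon_prime: assumes "Q \<in> Spec scM" shows "mprime (colon scM Q)"
proof -
  have Q: "M.subspace Q" "Q \<noteq> UNIV" "\<And>r m. scM r m \<in> Q \<Longrightarrow> r \<in> colon scM Q \<or> m \<in> Q"
    using assms by (auto simp: Spec_def prime_submodule_def)
  have "1 \<notin> colon scM Q" using Q(2) by (auto simp: colon_def)
  moreover have "a * b \<notin> colon scM Q" if "a \<notin> colon scM Q" "b \<notin> colon scM Q" for a b
  proof
    assume ab: "a * b \<in> colon scM Q"
    from that(2) obtain m where m: "scM b m \<notin> Q" by (auto simp: colon_def)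
    have "scM a (scM b m) \<in> Q" using ab by (simp add: colon_def)
    then show False using Q(3) that(1) m by blast
  qed
  ultimately show ?thesis by (auto simp: mprime_def)
qed

lemma colon_mult: "M.subspace L \<Longrightarrow> a \<in> colon scM L \<Longrightarrow> a * b \<in> colon scM L"
  unfolding colon_def
  by (auto simp: mult.commute[of a b] simp flip: M.scale_scale intro: M.subspace_scale)

lemma colon_mono: "L1 \<subseteq> L2 \<Longrightarrow> colon scM L1 \<subseteq> colon scM L2"
  unfolding colon_def by auto

lemma colon_Int: "colon scM (L1 \<inter> L2) = colon scM L1 \<inter> colon scM L2"
  unfolding colon_def by auto

lemma zopen_sub: "zopen scM U \<Longrightarrow> U \<subseteq> Spec scM"
  unfolding zopen_def by auto

lemma zopen_Int: assumes "zopen scM U" "zopen scM V" shows "zopen scM (U \<inter> V)"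
proof -
  obtain L1 L2 where L: "M.subspace L1" "U = Spec scM - zV scM L1" "M.subspace L2" "V = Spec scM - zV scM L2"
    using assms unfolding zopen_def by blast
  have "U \<inter> V = Spec scM - zV scM (L1 \<inter> L2)"
  proof -
    have "colon scM (L1 \<inter> L2) \<subseteq> colon scM Q \<longleftrightarrow> colon scM L1 \<subseteq> colon scM Q \<or> colon scM L2 \<subseteq> colon scM Q"
      if Q: "Q \<in> Spec scM" for Q
    proof
      assume h: "colon scM (L1 \<inter> L2) \<subseteq> colon scM Q"
      show "colon scM L1 \<subseteq> colon scM Q \<or> colon scM L2 \<subseteq> colon scM Q"
      proof (rule ccontr)
        assume "\<not> ?thesis"
        then obtain a b where ab: "a \<in> colon scM L1" "a \<notin> colon scM Q" "b \<in> colon scM L2" "b \<notin> colon scM Q"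
          by auto
        have "a * b \<in> colon scM L1" using colon_mult[OF L(1) ab(1)] .
        moreover have "a * b \<in> colon scM L2" using colon_mult[OF L(3) ab(3), of a] by (simp add: mult.commute)
        ultimately have "a * b \<in> colon scM Q" using h colon_Int by blast
        then show False using colon_prime[OF Q] ab by (auto simp: mprime_def)
      qed
    next
      assume "colon scM L1 \<subseteq> colon scM Q \<or> colon scM L2 \<subseteq> colon scM Q"
      then show "colon scM (L1 \<inter> L2) \<subseteq> colon scM Q" using colon_Int by blast
    qed
    then show ?thesis using L by (auto simp: zV_def)
  qed
  moreover have "M.subspace (L1 \<inter> L2)" using L by (auto simp: M.subspace_def)
  ultimately show ?thesis unfolding zopen_def by blast
qed

definition "Xb t = Spec scM - zV scM (range (scM t))"

lemma Xb_open: "zopen scM (Xb t)"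
proof -
  have "M.subspace (range (scM t))"
    unfolding M.subspace_def
  proof (intro conjI ballI allI)
    show "0 \<in> range (scM t)" by (metis M.scale_zero_right rangeI)
    fix x y assume "x \<in> range (scM t)" "y \<in> range (scM t)"
    then obtain a b where "x = scM t a" "y = scM t b" by auto
    then have "x + y = scM t (a + b)" by (simp add: M.scale_right_distrib)
    then show "x + y \<in> range (scM t)" by simp
  next
    fix c x assume "x \<in> range (scM t)"
    then obtain a where "x = scM t a" by auto
    then have "scM c x = scM t (scM c a)" by (simp add: mult.commute)
    then show "scM c x \<in> range (scM t)" by (simp only: rangeI)
  qed
  then show ?thesis unfolding zopen_def Xb_def by blast
qed

lemma Xb_iff: "Q \<in> Xb t \<longleftrightarrow> Q \<in> Spec scM \<and> t \<notin> colon scM Q"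
proof -
  have "colon scM (range (scM t)) \<subseteq> colon scM Q \<longleftrightarrow> t \<in> colon scM Q"
  proof
    assume "colon scM (range (scM t)) \<subseteq> colon scM Q"
    moreover have "t \<in> colon scM (range (scM t))" by (auto simp: colon_def)
    ultimately show "t \<in> colon scM Q" by blast
  next
    assume t: "t \<in> colon scM Q"
    show "colon scM (range (scM t)) \<subseteq> colon scM Q"
    proof
      fix r assume r: "r \<in> colon scM (range (scM t))"
      have "scM r m \<in> Q" for m
      proof -
        from r obtain m' where "scM r m = scM t m'" by (auto simp: colon_def)
        then show ?thesis using t by (simp add: colon_def)
      qed
      then show "r \<in> colon scM Q" by (simp add: colon_def)
    qed
  qed
  then show ?thesis by (auto simp: Xb_def zV_def)
qed


lemma Supp_iff: "q \<in> Supp scM U \<longleftrightarrow> (\<exists>Q\<in>U. q = colon scM Q)"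
  by (auto simp: Supp_def)

lemma Supp_mono: "W \<subseteq> U \<Longrightarrow> Supp scM W \<subseteq> Supp scM U"
  by (auto simp: Supp_def)

lemma restr_mono: "W' \<subseteq> W \<Longrightarrow> restr scM W \<gamma> = restr scM W \<delta> \<Longrightarrow> restr scM W' \<gamma> = restr scM W' \<delta>"
  unfolding restr_def by (metis (full_types) Supp_mono subsetD)

lemma germ_equiv: "equiv (germ_reps scM scN P) (germ_rel scM scN P)"
proof (rule equivI)
  show "germ_rel scM scN P \<subseteq> germ_reps scM scN P \<times> germ_reps scM scN P"
    unfolding germ_rel_def by auto
  show "refl_on (germ_reps scM scN P) (germ_rel scM scN P)"
    by (rule refl_onI) (auto simp: germ_rel_def germ_reps_def)
  show "sym (germ_rel scM scN P)"
    by (rule symI) (auto simp: germ_rel_def)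
  show "trans (germ_rel scM scN P)"
  proof (rule transI)
    fix x y z assume xy: "(x, y) \<in> germ_rel scM scN P" and yz: "(y, z) \<in> germ_rel scM scN P"
    obtain U \<gamma> V \<delta> X \<epsilon> where e: "x = (U, \<gamma>)" "y = (V, \<delta>)" "z = (X, \<epsilon>)"
      by (cases x, cases y, cases z) auto
    obtain W1 where W1: "zopen scM W1" "P \<in> W1" "W1 \<subseteq> U \<inter> V" "restr scM W1 \<gamma> = restr scM W1 \<delta>"
      using xy e by (auto simp: germ_rel_def)
    obtain W2 where W2: "zopen scM W2" "P \<in> W2" "W2 \<subseteq> V \<inter> X" "restr scM W2 \<delta> = restr scM W2 \<epsilon>"
      using yz e by (auto simp: germ_rel_def)
    have "restr scM (W1 \<inter> W2) \<gamma> = restr scM (W1 \<inter> W2) \<delta>" using restr_mono W1(4) by blast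
    moreover have "restr scM (W1 \<inter> W2) \<delta> = restr scM (W1 \<inter> W2) \<epsilon>" using restr_mono W2(4) by blast
    ultimately show "(x, z) \<in> germ_rel scM scN P"
      using xy yz e W1 W2 zopen_Int[OF W1(1) W2(1)] unfolding germ_rel_def
      by (auto intro!: exI[of _ "W1 \<inter> W2"])
  qed
qed

abbreviation "p0 \<equiv> colon scM P"

definition "phi a = snd (SOME x. x \<in> a) p0"

lemma phi_class:
  assumes c: "c \<in> germ_reps scM scN P"
  shows "phi (germ_rel scM scN P `` {c}) = snd c p0"
proof -
  have "c \<in> germ_rel scM scN P `` {c}" by (rule equiv_class_self[OF germ_equiv c])
  then have "(SOME x. x \<in> germ_rel scM scN P `` {c}) \<in> germ_rel scM scN P `` {c}" by (rule someI)
  then obtain x where x: "(SOME x. x \<in> germ_rel scM scN P `` {c}) = x" "(c, x) \<in> germ_rel scM scN P" by auto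
  obtain W where W: "P \<in> W" "restr scM W (snd c) = restr scM W (snd x)"
    using x(2) by (cases c, cases x) (auto simp: germ_rel_def)
  have "p0 \<in> Supp scM W" using W(1) by (auto simp: Supp_def)
  then have "snd c p0 = snd x p0" using fun_cong[OF W(2), of p0] by (simp add: restr_def)
  then show ?thesis unfolding phi_def x(1) by simp
qed

lemma phi_in: "c \<in> germ_reps scM scN P \<Longrightarrow> snd c p0 \<in> Loc scN p0"
  unfolding germ_reps_def sections_def Supp_def by auto

lemma sec_Loc: "\<gamma> \<in> sections scM scN U \<Longrightarrow> q \<in> Supp scM U \<Longrightarrow> \<gamma> q \<in> Loc scN q"
  unfolding sections_def by auto

lemma sec_local: "\<gamma> \<in> sections scM scN U \<Longrightarrow> Q \<in> U \<Longrightarrow> \<exists>W s m. zopen scM W \<and> W \<subseteq> U \<and> Q \<in> W \<and>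
        (\<forall>P \<in> W. s \<notin> colon scM P \<and> \<gamma> (colon scM P) = frac scN (colon scM P) m s)"
  unfolding sections_def by auto

lemma germ_inj:
  assumes c: "c \<in> germ_reps scM scN P" and d: "d \<in> germ_reps scM scN P"
    and eq: "snd c p0 = snd d p0"
  shows "(c, d) \<in> germ_rel scM scN P"
proof -
  obtain U \<gamma> V \<delta> where e: "c = (U, \<gamma>)" "d = (V, \<delta>)" by (cases c, cases d) auto
  have U: "zopen scM U" "P \<in> U" "\<gamma> \<in> sections scM scN U" using c e by (auto simp: germ_reps_def)
  have V: "zopen scM V" "P \<in> V" "\<delta> \<in> sections scM scN V" using d e by (auto simp: germ_reps_def)
  obtain W1 s m where W1: "zopen scM W1" "W1 \<subseteq> U" "P \<in> W1"
     "\<forall>Q \<in> W1. s \<notin> colon scM Q \<and> \<gamma> (colon scM Q) = frac scN (colon scM Q) m s"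
    using sec_local[OF U(3) U(2)] by blast
  obtain W2 s' m' where W2: "zopen scM W2" "W2 \<subseteq> V" "P \<in> W2"
     "\<forall>Q \<in> W2. s' \<notin> colon scM Q \<and> \<delta> (colon scM Q) = frac scN (colon scM Q) m' s'"
    using sec_local[OF V(3) V(2)] by blast
  have pp: "mprime p0" by (rule colon_prime[OF PS])
  have "frac scN p0 m s = frac scN p0 m' s'" using eq e W1(3,4) W2(3,4) by auto
  then obtain t where t: "t \<notin> p0" "scN t (scN s' m - scN s m') = 0"
    using N.frac_eq_iff[OF pp] W1(3,4) W2(3,4) by blast
  define W where "W = W1 \<inter> W2 \<inter> Xb t"
  have Wo: "zopen scM W" unfolding W_def by (intro zopen_Int Xb_open W1(1) W2(1))
  have PW: "P \<in> W" unfolding W_def using W1(3) W2(3) t(1) PS Xb_iff by blast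
  have "restr scM W \<gamma> = restr scM W \<delta>"
  proof
    fix q show "restr scM W \<gamma> q = restr scM W \<delta> q"
    proof (cases "q \<in> Supp scM W")
      case True
      then obtain Q where Q: "Q \<in> W" "q = colon scM Q" by (auto simp: Supp_def)
      have QS: "Q \<in> Spec scM" "t \<notin> q" using Q Xb_iff unfolding W_def by auto
      have "\<gamma> q = frac scN q m s" "\<delta> q = frac scN q m' s'" "s \<notin> q" "s' \<notin> q"
        using Q W1(4) W2(4) unfolding W_def by auto
      moreover have "frac scN q m s = frac scN q m' s'"
        using N.frac_eq_iff[OF colon_prime[OF QS(1)]] Q(2) QS(2) t(2) calculation(3,4) by blast
      ultimately show ?thesis using True by (simp add: restr_def)
    qed (simp add: restr_def)
  qed
  then show ?thesis using c d e W1 W2 Wo PW unfolding germ_rel_def W_def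
    by (auto intro!: exI[of _ "W1 \<inter> W2 \<inter> Xb t"])
qed

lemma germ_surj:
  assumes A: "A \<in> Loc scN p0"
  shows "\<exists>c \<in> germ_reps scM scN P. snd c p0 = A"
proof -
  obtain m s where ms: "s \<notin> p0" "A = frac scN p0 m s" using N.Loc_frac[OF A] by blast
  define \<gamma> where "\<gamma> = (\<lambda>q. if q \<in> Supp scM (Xb s) then frac scN q m s else {})"
  have PX: "P \<in> Xb s" using PS ms Xb_iff by blast
  have "\<gamma> \<in> sections scM scN (Xb s)"
    unfolding sections_def
  proof (intro CollectI conjI allI impI ballI)
    fix q assume "q \<in> Supp scM (Xb s)"
    then obtain Q where "Q \<in> Xb s" "q = colon scM Q" by (auto simp: Supp_def)
    then have "s \<notin> q" using Xb_iff by blast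
    then show "\<gamma> q \<in> Loc scN q" using \<open>q \<in> Supp scM (Xb s)\<close>
      by (simp add: \<gamma>_def N.frac_in_Loc)
  next
    fix Q assume "Q \<in> Xb s"
    show "\<exists>W s' m'. zopen scM W \<and> W \<subseteq> Xb s \<and> Q \<in> W \<and>
        (\<forall>P \<in> W. s' \<notin> colon scM P \<and> \<gamma> (colon scM P) = frac scN (colon scM P) m' s')"
      using Xb_open \<open>Q \<in> Xb s\<close> Xb_iff
      by (intro exI[of _ "Xb s"] exI[of _ s] exI[of _ m]) (auto simp: \<gamma>_def Supp_def)
  qed (simp add: \<gamma>_def)
  moreover have "\<gamma> p0 = A" using PX ms by (auto simp: \<gamma>_def Supp_def)
  ultimately show ?thesis using PX Xb_open unfolding germ_reps_def by (intro bexI[of _ "(Xb s, \<gamma>)"]) auto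
qed


lemma add_reps:
  assumes c: "(U, \<gamma>) \<in> germ_reps scM scN P" and d: "(V, \<delta>) \<in> germ_reps scM scN P"
  shows "(U \<inter> V, sec_add scM scN (U \<inter> V) (restr scM (U \<inter> V) \<gamma>) (restr scM (U \<inter> V) \<delta>))
     \<in> germ_reps scM scN P"
proof -
  have U: "zopen scM U" "P \<in> U" "\<gamma> \<in> sections scM scN U" using c by (auto simp: germ_reps_def)
  have V: "zopen scM V" "P \<in> V" "\<delta> \<in> sections scM scN V" using d by (auto simp: germ_reps_def)
  define \<sigma> where "\<sigma> = sec_add scM scN (U \<inter> V) (restr scM (U \<inter> V) \<gamma>) (restr scM (U \<inter> V) \<delta>)"
  have \<sigma>v: "\<sigma> q = loc_add scN q (\<gamma> q) (\<delta> q)" if "q \<in> Supp scM (U \<inter> V)" for q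
    using that by (simp add: \<sigma>_def sec_add_def restr_def)
  have "\<sigma> \<in> sections scM scN (U \<inter> V)"
    unfolding sections_def
  proof (intro CollectI conjI allI impI ballI)
    fix q assume q: "q \<notin> Supp scM (U \<inter> V)"
    then show "\<sigma> q = {}" by (simp add: \<sigma>_def sec_add_def)
  next
    fix q assume q: "q \<in> Supp scM (U \<inter> V)"
    then obtain Q where Q: "Q \<in> U \<inter> V" "q = colon scM Q" by (auto simp: Supp_def)
    have pq: "mprime q" using Q zopen_sub[OF U(1)] colon_prime by blast
    have "\<gamma> q \<in> Loc scN q" "\<delta> q \<in> Loc scN q"
      using sec_Loc[OF U(3)] sec_Loc[OF V(3)] Q by (auto simp: Supp_def)
    then obtain m s m' s' where "s \<notin> q" "\<gamma> q = frac scN q m s" "s' \<notin> q" "\<delta> q = frac scN q m' s'"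
      using N.Loc_frac by metis
    moreover have "s * s' \<notin> q" using pq calculation by (auto simp: mprime_def)
    ultimately show "\<sigma> q \<in> Loc scN q" using \<sigma>v[OF q] N.loc_add_frac[OF pq] N.frac_in_Loc by simp
  next
    fix Q assume Q: "Q \<in> U \<inter> V"
    obtain W1 s m where W1: "zopen scM W1" "W1 \<subseteq> U" "Q \<in> W1"
       "\<forall>Q \<in> W1. s \<notin> colon scM Q \<and> \<gamma> (colon scM Q) = frac scN (colon scM Q) m s"
      using sec_local[OF U(3)] Q by blast
    obtain W2 s' m' where W2: "zopen scM W2" "W2 \<subseteq> V" "Q \<in> W2"
       "\<forall>Q \<in> W2. s' \<notin> colon scM Q \<and> \<delta> (colon scM Q) = frac scN (colon scM Q) m' s'"
      using sec_local[OF V(3)] Q by blast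
    have "\<forall>Q' \<in> W1 \<inter> W2. s * s' \<notin> colon scM Q' \<and>
       \<sigma> (colon scM Q') = frac scN (colon scM Q') (scN s' m + scN s m') (s * s')"
    proof
      fix Q' assume Q': "Q' \<in> W1 \<inter> W2"
      have pq: "mprime (colon scM Q')" using Q' W1(2) zopen_sub[OF U(1)] colon_prime by blast
      have h: "s \<notin> colon scM Q'" "s' \<notin> colon scM Q'" using Q' W1(4) W2(4) by auto
      have "colon scM Q' \<in> Supp scM (U \<inter> V)" using Q' W1(2) W2(2) by (auto simp: Supp_def)
      then show "s * s' \<notin> colon scM Q' \<and>
         \<sigma> (colon scM Q') = frac scN (colon scM Q') (scN s' m + scN s m') (s * s')"
        using \<sigma>v N.loc_add_frac[OF pq h] Q' W1(4) W2(4) pq h by (auto simp: mprime_def)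
    qed
    then show "\<exists>W s m. zopen scM W \<and> W \<subseteq> U \<inter> V \<and> Q \<in> W \<and>
        (\<forall>P \<in> W. s \<notin> colon scM P \<and> \<sigma> (colon scM P) = frac scN (colon scM P) m s)"
      using zopen_Int[OF W1(1) W2(1)] W1 W2 by blast
  qed
  then show ?thesis using U V zopen_Int[OF U(1) V(1)] unfolding germ_reps_def \<sigma>_def by auto
qed

lemma smul_reps:
  assumes c: "(U, \<gamma>) \<in> germ_reps scM scN P"
  shows "(U, sec_smul scM scN U r \<gamma>) \<in> germ_reps scM scN P"
proof -
  have U: "zopen scM U" "P \<in> U" "\<gamma> \<in> sections scM scN U" using c by (auto simp: germ_reps_def)
  define \<sigma> where "\<sigma> = sec_smul scM scN U r \<gamma>"
  have \<sigma>v: "\<sigma> q = loc_smul scN q r (\<gamma> q)" if "q \<in> Supp scM U" for q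
    using that by (simp add: \<sigma>_def sec_smul_def)
  have "\<sigma> \<in> sections scM scN U"
    unfolding sections_def
  proof (intro CollectI conjI allI impI ballI)
    fix q assume q: "q \<notin> Supp scM U"
    then show "\<sigma> q = {}" by (simp add: \<sigma>_def sec_smul_def)
  next
    fix q assume q: "q \<in> Supp scM U"
    then obtain Q where Q: "Q \<in> U" "q = colon scM Q" by (auto simp: Supp_def)
    have pq: "mprime q" using Q zopen_sub[OF U(1)] colon_prime by blast
    have "\<gamma> q \<in> Loc scN q" using sec_Loc[OF U(3) q] .
    then obtain m s where "s \<notin> q" "\<gamma> q = frac scN q m s"
      using N.Loc_frac by metis
    then show "\<sigma> q \<in> Loc scN q" using \<sigma>v[OF q] N.loc_smul_frac[OF pq] N.frac_in_Loc by simp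
  next
    fix Q assume Q: "Q \<in> U"
    obtain W1 s m where W1: "zopen scM W1" "W1 \<subseteq> U" "Q \<in> W1"
       "\<forall>Q \<in> W1. s \<notin> colon scM Q \<and> \<gamma> (colon scM Q) = frac scN (colon scM Q) m s"
      using sec_local[OF U(3)] Q by blast
    have "\<forall>Q' \<in> W1. s \<notin> colon scM Q' \<and>
       \<sigma> (colon scM Q') = frac scN (colon scM Q') (scN r m) s"
    proof
      fix Q' assume Q': "Q' \<in> W1"
      have pq: "mprime (colon scM Q')" using Q' W1(2) zopen_sub[OF U(1)] colon_prime by blast
      have h: "s \<notin> colon scM Q'" using Q' W1(4) by auto
      have "colon scM Q' \<in> Supp scM U" using Q' W1(2) by (auto simp: Supp_def)
      then show "s \<notin> colon scM Q' \<and> \<sigma> (colon scM Q') = frac scN (colon scM Q') (scN r m) s"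
        using \<sigma>v N.loc_smul_frac[OF pq h] Q' W1(4) h by auto
    qed
    then show "\<exists>W s m. zopen scM W \<and> W \<subseteq> U \<and> Q \<in> W \<and>
        (\<forall>P \<in> W. s \<notin> colon scM P \<and> \<sigma> (colon scM P) = frac scN (colon scM P) m s)"
      using W1 by blast
  qed
  then show ?thesis using U unfolding germ_reps_def \<sigma>_def by auto
qed

lemma some_rep: "a \<in> stalk scM scN P \<Longrightarrow> (SOME x. x \<in> a) \<in> a \<and> (SOME x. x \<in> a) \<in> germ_reps scM scN P"
  unfolding stalk_def
  by (metis (no_types, lifting) germ_equiv equiv_class_self in_quotient_imp_subset quotientE someI subsetD)

lemma main:
  "\<exists>\<phi>. bij_betw \<phi> (stalk scM scN P) (Loc scN (colon scM P)) \<and>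
    (\<forall>a \<in> stalk scM scN P. \<forall>b \<in> stalk scM scN P.
       \<phi> (stalk_add scM scN P a b) = loc_add scN (colon scM P) (\<phi> a) (\<phi> b)) \<and>
    (\<forall>r. \<forall>a \<in> stalk scM scN P.
       \<phi> (stalk_smul scM scN P r a) = loc_smul scN (colon scM P) r (\<phi> a))"
proof (intro exI[of _ phi] conjI ballI allI)
  show "bij_betw phi (stalk scM scN P) (Loc scN p0)"
    unfolding bij_betw_def
  proof
    show "inj_on phi (stalk scM scN P)"
    proof (rule inj_onI)
      fix a b assume a: "a \<in> stalk scM scN P" and b: "b \<in> stalk scM scN P" and e: "phi a = phi b"
      from a obtain c where c: "c \<in> germ_reps scM scN P" "a = germ_rel scM scN P `` {c}"
        unfolding stalk_def by (auto elim!: quotientE)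
      from b obtain d where d: "d \<in> germ_reps scM scN P" "b = germ_rel scM scN P `` {d}"
        unfolding stalk_def by (auto elim!: quotientE)
      have "snd c p0 = snd d p0" using e phi_class c d by simp
      then have "(c, d) \<in> germ_rel scM scN P" by (rule germ_inj[OF c(1) d(1)])
      then show "a = b" using c d equiv_class_eq[OF germ_equiv] by simp
    qed
    show "phi ` stalk scM scN P = Loc scN p0"
    proof
      show "phi ` stalk scM scN P \<subseteq> Loc scN p0"
      proof
        fix x assume "x \<in> phi ` stalk scM scN P"
        then obtain a where a: "a \<in> stalk scM scN P" "x = phi a" by auto
        then obtain c where c: "c \<in> germ_reps scM scN P" "a = germ_rel scM scN P `` {c}"
          unfolding stalk_def by (auto elim!: quotientE)
        then show "x \<in> Loc scN p0" using a phi_class phi_in by simp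
      qed
      show "Loc scN p0 \<subseteq> phi ` stalk scM scN P"
      proof
        fix A assume "A \<in> Loc scN p0"
        then obtain c where c: "c \<in> germ_reps scM scN P" "snd c p0 = A" using germ_surj by blast
        have "germ_rel scM scN P `` {c} \<in> stalk scM scN P"
          unfolding stalk_def using c(1) by (rule quotientI)
        moreover have "phi (germ_rel scM scN P `` {c}) = A" using phi_class c by simp
        ultimately show "A \<in> phi ` stalk scM scN P" by (metis imageI)
      qed
    qed
  qed
next
  fix a b assume a: "a \<in> stalk scM scN P" and b: "b \<in> stalk scM scN P"
  obtain U \<gamma> where x: "(SOME x. x \<in> a) = (U, \<gamma>)" by (cases "SOME x. x \<in> a") auto
  obtain V \<delta> where y: "(SOME x. x \<in> b) = (V, \<delta>)" by (cases "SOME x. x \<in> b") auto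
  have xr: "(U, \<gamma>) \<in> germ_reps scM scN P" using some_rep[OF a] x by simp
  have yr: "(V, \<delta>) \<in> germ_reps scM scN P" using some_rep[OF b] y by simp
  have "P \<in> U \<inter> V" using xr yr by (auto simp: germ_reps_def)
  then have pS: "p0 \<in> Supp scM (U \<inter> V)" by (auto simp: Supp_def)
  have "phi (stalk_add scM scN P a b) =
     sec_add scM scN (U \<inter> V) (restr scM (U \<inter> V) \<gamma>) (restr scM (U \<inter> V) \<delta>) p0"
    unfolding stalk_add_def x y Let_def using phi_class[OF add_reps[OF xr yr]] by simp
  also have "\<dots> = loc_add scN p0 (\<gamma> p0) (\<delta> p0)" using pS by (simp add: sec_add_def restr_def)
  also have "\<dots> = loc_add scN p0 (phi a) (phi b)" unfolding phi_def x y by simp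
  finally show "phi (stalk_add scM scN P a b) = loc_add scN p0 (phi a) (phi b)" .
next
  fix r a assume a: "a \<in> stalk scM scN P"
  obtain U \<gamma> where x: "(SOME x. x \<in> a) = (U, \<gamma>)" by (cases "SOME x. x \<in> a") auto
  have xr: "(U, \<gamma>) \<in> germ_reps scM scN P" using some_rep[OF a] x by simp
  have "P \<in> U" using xr by (auto simp: germ_reps_def)
  then have pS: "p0 \<in> Supp scM U" by (auto simp: Supp_def)
  have "phi (stalk_smul scM scN P r a) = sec_smul scM scN U r \<gamma> p0"
    unfolding stalk_smul_def x Let_def using phi_class[OF smul_reps[OF xr]] by simp
  also have "\<dots> = loc_smul scN p0 r (phi a)" using pS unfolding phi_def x by (simp add: sec_smul_def)
  finally show "phi (stalk_smul scM scN P r a) = loc_smul scN p0 r (phi a)" .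
qed

end

theorem proposition3p2:
  fixes scM :: "'r::comm_ring_1 \<Rightarrow> 'm::ab_group_add \<Rightarrow> 'm"
    and scN :: "'r \<Rightarrow> 'n::ab_group_add \<Rightarrow> 'n"
    and P :: "'m set"
  assumes "module scM" and "module scN"
    and "Spec scM \<noteq> {}"
    and "P \<in> Spec scM"
  shows "\<exists>\<phi>. bij_betw \<phi> (stalk scM scN P) (Loc scN (colon scM P)) \<and>
    (\<forall>a \<in> stalk scM scN P. \<forall>b \<in> stalk scM scN P.
       \<phi> (stalk_add scM scN P a b) = loc_add scN (colon scM P) (\<phi> a) (\<phi> b)) \<and>
    (\<forall>r. \<forall>a \<in> stalk scM scN P.
       \<phi> (stalk_smul scM scN P r a) = loc_smul scN (colon scM P) r (\<phi> a))"
proof -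
  interpret setting scM scN P using assms by (simp add: setting_def setting_axioms_def)
  show ?thesis by (rule main)
qed

end
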